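(* For every $n\ge 0$, $|P_n^2|$ is at most the number of words of length $3n$ over the alphabet $\{m_1,m_2,m_3\}$ that contain none of $m_1m_3$, $m_1m_2m_2m_3$, $m_1m_2m_3m_2$ as a (contiguous) factor. This number equals $[x^{3n}]\,U(x)$ where $U(x)=\dfrac{1}{1-3x+x^2+2x^4}$, and consequently $|P_n^2|\in O(14.864^n)$.
   Context: A system of $2$ stacks in series consists of an input queue, stack 1, stack 2, and an output queue. Moves: $m_1$ moves the front of the input queue onto stack 1; $m_2$ pops stack 1 and pushes onto stack 2; $m_3$ pops stack 2 and enqueues at the back of the output queue. A word $w$ over $\{m_1,m_2,m_3\}$ acts on states by applying moves left to right (illegal if a move's source is empty). $I(n,2)$ is the state with $1,\dots,n$ in the input queue (front to back) and everything else empty; for $\pi\in S_n$, $t_\pi$ is the state with only the output queue nonempty, containing $\pi(1),\dots,\pi(n)$ front to back. $P_n^2\subseteq S_n$ is the set of $\pi$ such that some word $w$ legally transforms $I(n,2)$ into $t_\pi$. $[x^N]F(x)$ denotes the coefficient of $x^N$ in the power series $F$. *)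

theory Defs
  imports "HOL-Library.Sublist" "HOL-Library.Landau_Symbols"
    "HOL-Computational_Algebra.Formal_Power_Series"
    "HOL-Combinatorics.Permutations"
begin

datatype move = m1 | m2 | m3

text \<open>State: (input queue front-to-back, stack 1 top-first, stack 2 top-first,
  output queue front-to-back).\<close>
type_synonym state = "nat list \<times> nat list \<times> nat list \<times> nat list"

fun step :: "move \<Rightarrow> state \<Rightarrow> state option" where
  "step m1 (x # inp, s1, s2, out) = Some (inp, x # s1, s2, out)"
| "step m1 ([], s1, s2, out) = None"
| "step m2 (inp, x # s1, s2, out) = Some (inp, s1, x # s2, out)"
| "step m2 (inp, [], s2, out) = None"
| "step m3 (inp, s1, x # s2, out) = Some (inp, s1, s2, out @ [x])"
| "step m3 (inp, s1, [], out) = None"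

fun run :: "move list \<Rightarrow> state \<Rightarrow> state option" where
  "run [] s = Some s"
| "run (m # w) s = Option.bind (step m s) (run w)"

definition init_state :: "nat \<Rightarrow> state" where
  "init_state n = ([1..<n+1], [], [], [])"

definition target_state :: "(nat \<Rightarrow> nat) \<Rightarrow> nat \<Rightarrow> state" where
  "target_state \<pi> n = ([], [], [], map \<pi> [1..<n+1])"

definition P2 :: "nat \<Rightarrow> (nat \<Rightarrow> nat) set" where
  "P2 n = {\<pi>. \<pi> permutes {1..n} \<and> (\<exists>w. run w (init_state n) = Some (target_state \<pi> n))}"

definition avoiding_words :: "nat \<Rightarrow> move list set" where
  "avoiding_words n = {w. length w = 3 * n \<and> \<not> sublist [m1, m3] w
      \<and> \<not> sublist [m1, m2, m2, m3] w \<and> \<not> sublist [m1, m2, m3, m2] w}"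

definition U :: "real fps" where
  "U = inverse (1 - 3 * fps_X + fps_X ^ 2 + 2 * fps_X ^ 4)"

end

theory Submission imports Defs begin

definition valid :: "move list \<Rightarrow> bool" where
  "valid w = (\<not> sublist [m1, m3] w \<and> \<not> sublist [m1, m2, m2, m3] w \<and> \<not> sublist [m1, m2, m3, m2] w)"

definition NN :: "nat \<Rightarrow> (move list \<Rightarrow> bool) \<Rightarrow> nat" where
  "NN L P = card {w. length w = L \<and> P w}"

lemma UNIV_move: "(UNIV :: move set) = {m1, m2, m3}"
  using move.exhaust by auto

lemma finite_len: "finite {w :: move list. length w = L \<and> P w}"
proof -
  have "finite {w :: move list. set w \<subseteq> UNIV \<and> length w = L}"
    by (rule finite_lists_length_eq) (simp add: UNIV_move)
  then show ?thesis by (rule finite_subset[rotated]) auto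
qed

lemma NN_cong: "(\<And>w. P w = Q w) \<Longrightarrow> NN L P = NN L Q"
  unfolding NN_def by simp

lemma NN_0: "NN 0 P = (if P [] then 1 else 0)"
proof (cases "P []")
  case True
  then have "{w. length w = 0 \<and> P w} = {[]}" by auto
  then show ?thesis using True unfolding NN_def by simp
next
  case False
  then have "{w. length w = 0 \<and> P w} = {}" by auto
  then show ?thesis using False unfolding NN_def by simp
qed

lemma NN_False: "NN L (\<lambda>w. False) = 0"
  unfolding NN_def by simp

lemma NN_Suc: "NN (Suc L) P = NN L (\<lambda>w. P (m1 # w)) + NN L (\<lambda>w. P (m2 # w)) + NN L (\<lambda>w. P (m3 # w))"
proof -
  define A where "A x = {w. length w = L \<and> P (x # w)}" for x
  have eq: "{w. length w = Suc L \<and> P w} = (Cons m1 ` A m1 \<union> Cons m2 ` A m2) \<union> Cons m3 ` A m3"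
  proof (rule set_eqI, rule iffI)
    fix w assume "w \<in> {w. length w = Suc L \<and> P w}"
    then obtain x v where w: "w = x # v" "length v = L" "P (x # v)" by (cases w) auto
    then show "w \<in> (Cons m1 ` A m1 \<union> Cons m2 ` A m2) \<union> Cons m3 ` A m3"
      by (cases x) (auto simp: A_def)
  qed (auto simp: A_def)
  have fin: "finite (A x)" for x unfolding A_def by (rule finite_len)
  have "card ((Cons m1 ` A m1 \<union> Cons m2 ` A m2) \<union> Cons m3 ` A m3)
      = card (Cons m1 ` A m1 \<union> Cons m2 ` A m2) + card (Cons m3 ` A m3)"
    by (rule card_Un_disjoint) (auto simp: fin)
  also have "card (Cons m1 ` A m1 \<union> Cons m2 ` A m2) = card (Cons m1 ` A m1) + card (Cons m2 ` A m2)"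
    by (rule card_Un_disjoint) (auto simp: fin)
  finally have c0: "card {w. length w = Suc L \<and> P w} = card (Cons m1 ` A m1) + card (Cons m2 ` A m2) + card (Cons m3 ` A m3)"
    using eq by simp
  have c: "card (Cons x ` A x) = card (A x)" for x by (rule card_image) simp
  have "card {w. length w = Suc L \<and> P w} = card (A m1) + card (A m2) + card (A m3)"
    using c0 c by simp
  then show ?thesis unfolding NN_def A_def .
qed

lemma valid_Cons: "valid (x # w) = (valid w \<and> \<not> prefix [m1, m3] (x # w)
   \<and> \<not> prefix [m1, m2, m2, m3] (x # w) \<and> \<not> prefix [m1, m2, m3, m2] (x # w))"
  unfolding valid_def by (auto simp: sublist_Cons_right)

definition "cf L = NN L valid"
definition "cg L = NN L (\<lambda>w. valid (m1 # w))"
definition "ch L = NN L (\<lambda>w. valid (m1 # m2 # w))"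
definition "cp L = NN L (\<lambda>w. valid (m1 # m2 # m2 # w))"
definition "cq L = NN L (\<lambda>w. valid (m1 # m2 # m3 # w))"

lemma valid_simps:
  "valid (m2 # w) = valid w" "valid (m3 # w) = valid w"
  "valid (m1 # m1 # w) = valid (m1 # w)" "valid (m1 # m3 # w) = False"
  "valid (m1 # m2 # m1 # w) = valid (m1 # w)"
  "valid (m1 # m2 # m2 # m1 # w) = valid (m1 # w)"
  "valid (m1 # m2 # m2 # m2 # w) = valid w"
  "valid (m1 # m2 # m2 # m3 # w) = False"
  "valid (m1 # m2 # m3 # m1 # w) = valid (m1 # w)"
  "valid (m1 # m2 # m3 # m2 # w) = False"
  "valid (m1 # m2 # m3 # m3 # w) = valid w"
  by (simp_all add: valid_Cons)

lemma rec_cf: "cf (Suc L) = cg L + cf L + cf L"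
  unfolding cf_def cg_def NN_Suc[of L] by (simp add: valid_simps)
lemma rec_cg: "cg (Suc L) = cg L + ch L"
  unfolding cg_def ch_def NN_Suc[of L] by (simp add: valid_simps NN_False)
lemma rec_ch: "ch (Suc L) = cg L + cp L + cq L"
  unfolding cg_def ch_def cp_def cq_def NN_Suc[of L] by (simp add: valid_simps)
lemma rec_cp: "cp (Suc L) = cg L + cf L"
  unfolding cg_def cf_def cp_def NN_Suc[of L] by (simp add: valid_simps NN_False)
lemma rec_cq: "cq (Suc L) = cg L + cf L"
  unfolding cg_def cf_def cq_def NN_Suc[of L] by (simp add: valid_simps NN_False)
lemma base: "cf 0 = 1" "cg 0 = 1" "ch 0 = 1" "cp 0 = 1" "cq 0 = 1"
  unfolding cf_def cg_def ch_def cp_def cq_def NN_0 by (simp_all add: valid_def sublist_Cons_right)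

lemma cf_rec4: "int (cf (M + 4)) = 3 * int (cf (M + 3)) - int (cf (M + 2)) - 2 * int (cf M)"
proof -
  have e: "M + 4 = Suc (Suc (Suc (Suc M)))" "M + 3 = Suc (Suc (Suc M))" "M + 2 = Suc (Suc M)" by simp_all
  show ?thesis unfolding e
    using rec_cf[of M] rec_cf[of "Suc M"] rec_cf[of "Suc (Suc M)"] rec_cf[of "Suc (Suc (Suc M))"]
      rec_cg[of M] rec_cg[of "Suc M"] rec_cg[of "Suc (Suc M)"]
      rec_ch[of "Suc M"] rec_ch[of "Suc (Suc M)"] rec_cp[of M] rec_cq[of M]
    by linarith
qed

lemma cf_small: "cf 0 = 1" "cf 1 = 3" "cf 2 = 8" "cf 3 = 21"
proof -
  have "cf 1 = 3" using rec_cf[of 0] base by simp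
  moreover have "cg 1 = 2" "ch 1 = 3" "cp 1 = 2" "cq 1 = 2"
    using rec_cg[of 0] rec_ch[of 0] rec_cp[of 0] rec_cq[of 0] base by simp_all
  moreover have "cf 2 = 8" "cg 2 = 5" using rec_cf[of 1] rec_cg[of 1] calculation
    by (simp_all add: numeral_2_eq_2)
  moreover have "cf 3 = 21" using rec_cf[of 2] calculation by (simp add: numeral_3_eq_3 numeral_2_eq_2)
  ultimately show "cf 0 = 1" "cf 1 = 3" "cf 2 = 8" "cf 3 = 21" using base by simp_all
qed

lemma U_mult: "U * (1 - 3 * fps_X + fps_X ^ 2 + 2 * fps_X ^ 4) = 1"
  unfolding U_def by (rule inverse_mult_eq_1) simp

lemma U_coeff: "fps_nth U k - 3 * (if k < 1 then 0 else fps_nth U (k - 1)) + (if k < 2 then 0 else fps_nth U (k - 2))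
   + 2 * (if k < 4 then 0 else fps_nth U (k - 4)) = (if k = 0 then 1 else 0)"
proof -
  have "U * (1 - 3 * fps_X + fps_X ^ 2 + 2 * fps_X ^ 4)
     = U - fps_const 3 * (fps_X ^ 1 * U) + fps_X ^ 2 * U + fps_const 2 * (fps_X ^ 4 * U)"
    by (simp add: algebra_simps numeral_fps_const)
  then have "fps_nth (U - fps_const 3 * (fps_X ^ 1 * U) + fps_X ^ 2 * U + fps_const 2 * (fps_X ^ 4 * U)) k = fps_nth (1 :: real fps) k"
    using U_mult by simp
  then show ?thesis by (simp only: fps_add_nth fps_sub_nth fps_mult_left_const_nth fps_X_power_mult_nth fps_one_nth)
qed

lemma U_eq_cf: "fps_nth U L = real (cf L)"
proof (induction L rule: less_induct)
  case (less L)
  show ?case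
  proof (cases "L < 4")
    case True
    have u0: "fps_nth U 0 = 1" using U_coeff[of 0] by simp
    have u1: "fps_nth U 1 = 3" using U_coeff[of 1] u0 by simp
    have u2: "fps_nth U 2 = 8" using U_coeff[of 2] u0 u1 by simp
    have u3: "fps_nth U 3 = 21" using U_coeff[of 3] u1 u2 by simp
    from True have "L = 0 \<or> L = 1 \<or> L = 2 \<or> L = 3" by auto
    then show ?thesis using u0 u1 u2 u3 cf_small by auto
  next
    case False
    then obtain M where M: "L = M + 4" by (metis add.commute le_Suc_ex not_less)
    have "fps_nth U (M + 4) - 3 * fps_nth U (M + 3) + fps_nth U (M + 2) + 2 * fps_nth U M = 0"
      using U_coeff[of "M + 4"] by (simp add: numeral_eq_Suc)
    moreover have "fps_nth U (M + 3) = real (cf (M + 3))" "fps_nth U (M + 2) = real (cf (M + 2))" "fps_nth U M = real (cf M)"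
      using less M by auto
    moreover have "real (cf (M + 4)) = 3 * real (cf (M + 3)) - real (cf (M + 2)) - 2 * real (cf M)"
      using arg_cong[OF cf_rec4[of M], of real_of_int] by simp
    ultimately show ?thesis using M by simp
  qed
qed

definition Phi :: "nat \<Rightarrow> real" where
  "Phi L = 1773194586 * real (cf L) + 2458735000 * real (cg L) + 1000000000 * real (ch L)
     + 406713209 * (real (cp L) + real (cq L))"

lemma Phi_step: "Phi (Suc L) \<le> (2458735 / 1000000) * Phi L"
proof -
  have "real (cf (Suc L)) = real (cg L) + real (cf L) + real (cf L)" "real (cg (Suc L)) = real (cg L) + real (ch L)"
     "real (ch (Suc L)) = real (cg L) + real (cp L) + real (cq L)" "real (cp (Suc L)) = real (cg L) + real (cf L)"
     "real (cq (Suc L)) = real (cg L) + real (cf L)"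
    by (simp_all add: rec_cf rec_cg rec_ch rec_cp rec_cq)
  moreover have "real (cf L) \<ge> 0" "real (cg L) \<ge> 0" "real (ch L) \<ge> 0" "real (cp L) \<ge> 0"
     "real (cq L) \<ge> 0" by simp_all
  ultimately show ?thesis unfolding Phi_def ring_distribs by linarith
qed

lemma Phi_bound: "Phi L \<le> (2458735 / 1000000) ^ L * Phi 0"
proof (induction L)
  case 0 then show ?case by simp
next
  case (Suc L)
  have "Phi (Suc L) \<le> (2458735 / 1000000) * Phi L" by (rule Phi_step)
  also have "\<dots> \<le> (2458735 / 1000000) * ((2458735 / 1000000) ^ L * Phi 0)"
    using Suc by (intro mult_left_mono) simp_all
  finally show ?case by (simp add: mult.assoc)
qed

lemma cf_bound: "real (cf (3 * n)) \<le> (Phi 0 / 1773194586) * 14.864 ^ n"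
proof -
  have "1773194586 * real (cf (3 * n)) \<le> Phi (3 * n)" unfolding Phi_def by simp
  also have "\<dots> \<le> (2458735 / 1000000) ^ (3 * n) * Phi 0" by (rule Phi_bound)
  also have "(2458735 / 1000000 :: real) ^ (3 * n) = ((2458735 / 1000000) ^ 3) ^ n"
    by (simp add: power_mult)
  also have "\<dots> \<le> 14.864 ^ n" by (intro power_mono) (simp_all add: power3_eq_cube)
  finally have "1773194586 * real (cf (3 * n)) \<le> 14.864 ^ n * Phi 0"
    by (rule order.trans) (intro mult_right_mono, simp_all add: Phi_def)
  then show ?thesis by (simp add: field_simps)
qed

lemma run_append: "run (xs @ ys) s = Option.bind (run xs s) (run ys)"
proof (induction xs arbitrary: s)
  case Nil then show ?case by simp
next
  case (Cons m xs) then show ?case by (cases "step m s") simp_all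
qed

definition pot :: "state \<Rightarrow> nat" where
  "pot s = (case s of (i, a, b, c) \<Rightarrow> 3 * length i + 2 * length a + length b)"

lemma step_pot: "step m s = Some s' \<Longrightarrow> pot s = Suc (pot s')"
  by (erule step.elims) (auto simp: pot_def)

lemma run_pot: "run w s = Some s' \<Longrightarrow> pot s = length w + pot s'"
proof (induction w arbitrary: s)
  case Nil then show ?case by simp
next
  case (Cons m w)
  then obtain t where t: "step m s = Some t" "run w t = Some s'" by (cases "step m s") auto
  then show ?case using Cons.IH step_pot by fastforce
qed

lemma sw1: "run [m1, m3] t = Some t' \<Longrightarrow> run [m3, m1] t = Some t'"
  by (auto split: option.splits bind_splits elim!: step.elims)
lemma sw2: "run [m1, m2, m2, m3] t = Some t' \<Longrightarrow> run [m2, m3, m1, m2] t = Some t'"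
  by (auto split: option.splits bind_splits elim!: step.elims)
lemma sw3: "run [m1, m2, m3, m2] t = Some t' \<Longrightarrow> run [m2, m1, m2, m3] t = Some t'"
  by (auto split: option.splits bind_splits elim!: step.elims)

definition cnt1 :: "move list \<Rightarrow> nat" where "cnt1 w = length (filter (\<lambda>x. x = m1) w)"
definition cnt0 :: "move list \<Rightarrow> nat" where "cnt0 w = length (filter (\<lambda>x. x \<noteq> m1) w)"

fun cw :: "move list \<Rightarrow> nat" where
  "cw [] = 0"
| "cw (x # w) = (if x = m1 then cw w else cnt1 w + cw w)"

lemma cw_append: "cw (xs @ ys) = cw xs + cw ys + cnt0 xs * cnt1 ys"
  by (induction xs) (auto simp: cnt0_def cnt1_def algebra_simps)

lemma replace:
  assumes sw: "\<And>t t'. run l t = Some t' \<Longrightarrow> run r t = Some t'"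
    and c: "cnt0 l = cnt0 r" "cnt1 l = cnt1 r" "cw l < cw r"
    and R: "run (u @ l @ v) s = Some x"
  shows "run (u @ r @ v) s = Some x \<and> cw (u @ l @ v) < cw (u @ r @ v)"
proof
  from R obtain t t' where "run u s = Some t" "run l t = Some t'" "run v t' = Some x"
    by (auto simp: run_append split: bind_splits)
  then show "run (u @ r @ v) s = Some x" using sw by (simp add: run_append)
  have "cnt1 (l @ v) = cnt1 (r @ v)" using c by (simp add: cnt1_def)
  then show "cw (u @ l @ v) < cw (u @ r @ v)" using c by (simp add: cw_append)
qed

lemma finite_moves: "finite {w :: move list. length w = L}"
  using finite_len[of L "\<lambda>_. True"] by simp

lemma exists_avoid:
  assumes "run w0 (init_state n) = Some (target_state \<pi> n)"
  shows "\<exists>w. w \<in> avoiding_words n \<and> run w (init_state n) = Some (target_state \<pi> n)"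
proof -
  define W where "W = {w. run w (init_state n) = Some (target_state \<pi> n)}"
  have len: "length w = 3 * n" if "w \<in> W" for w
    using run_pot[of w "init_state n" "target_state \<pi> n"] that
    by (simp del: upt_Suc add: W_def pot_def init_state_def target_state_def)
  have "W \<subseteq> {w. length w = 3 * n}" using len by auto
  then have fin: "finite W" using finite_moves[of "3 * n"] by (rule finite_subset)
  have ne: "W \<noteq> {}" using assms W_def by auto
  define m where "m = Max (cw ` W)"
  have "m \<in> cw ` W" unfolding m_def using fin ne by (intro Max_in) auto
  then obtain w where w: "w \<in> W" "cw w = m" by auto
  have max: "cw w' \<le> cw w" if "w' \<in> W" for w'
    using w fin that unfolding m_def by auto
  have R: "run w (init_state n) = Some (target_state \<pi> n)" using w W_def by auto
  have no: False if "w = u @ l @ v" "\<And>t t'. run l t = Some t' \<Longrightarrow> run r t = Some t'"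
     "cnt0 l = cnt0 r" "cnt1 l = cnt1 r" "cw l < cw r" for u l v r
  proof -
    have "run (u @ r @ v) (init_state n) = Some (target_state \<pi> n) \<and> cw (u @ l @ v) < cw (u @ r @ v)"
      using replace[of l r u v] that R by blast
    then show False using max[of "u @ r @ v"] that(1) by (auto simp: W_def)
  qed
  have "\<not> sublist [m1, m3] w"
  proof
    assume "sublist [m1, m3] w"
    then obtain u v where "w = u @ [m1, m3] @ v" by (auto simp: sublist_def)
    then show False using no[of u "[m1, m3]" v "[m3, m1]"] sw1 by (auto simp: cnt0_def cnt1_def)
  qed
  moreover have "\<not> sublist [m1, m2, m2, m3] w"
  proof
    assume "sublist [m1, m2, m2, m3] w"
    then obtain u v where "w = u @ [m1, m2, m2, m3] @ v" by (auto simp: sublist_def)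
    then show False using no[of u "[m1, m2, m2, m3]" v "[m2, m3, m1, m2]"] sw2 by (auto simp: cnt0_def cnt1_def)
  qed
  moreover have "\<not> sublist [m1, m2, m3, m2] w"
  proof
    assume "sublist [m1, m2, m3, m2] w"
    then obtain u v where "w = u @ [m1, m2, m3, m2] @ v" by (auto simp: sublist_def)
    then show False using no[of u "[m1, m2, m3, m2]" v "[m2, m1, m2, m3]"] sw3 by (auto simp: cnt0_def cnt1_def)
  qed
  ultimately have "w \<in> avoiding_words n" using len[OF w(1)] by (simp add: avoiding_words_def)
  then show ?thesis using R by blast
qed

lemma avoiding_eq: "avoiding_words n = {w. length w = 3 * n \<and> valid w}"
  unfolding avoiding_words_def valid_def by simp

lemma card_P2: "card (P2 n) \<le> card (avoiding_words n)"
proof -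
  define F where "F \<pi> = (SOME w. w \<in> avoiding_words n \<and> run w (init_state n) = Some (target_state \<pi> n))" for \<pi>
  have F: "F \<pi> \<in> avoiding_words n \<and> run (F \<pi>) (init_state n) = Some (target_state \<pi> n)"
    if "\<pi> \<in> P2 n" for \<pi>
  proof -
    from that obtain w0 where "run w0 (init_state n) = Some (target_state \<pi> n)" by (auto simp: P2_def)
    from exists_avoid[OF this] show ?thesis unfolding F_def by (rule someI_ex)
  qed
  have inj: "inj_on F (P2 n)"
  proof (rule inj_onI)
    fix a b assume a: "a \<in> P2 n" and b: "b \<in> P2 n" and e: "F a = F b"
    have "target_state a n = target_state b n" using F[OF a] F[OF b] e by simp
    then have m: "map a [1..<n+1] = map b [1..<n+1]" by (simp add: target_state_def)
    have pa: "a permutes {1..n}" and pb: "b permutes {1..n}" using a b by (auto simp: P2_def)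
    show "a = b"
    proof
      fix x
      show "a x = b x"
      proof (cases "x \<in> {1..n}")
        case True then show ?thesis using m by (auto simp: map_eq_conv)
      next
        case False then show ?thesis using pa pb by (simp add: permutes_not_in)
      qed
    qed
  qed
  have fin: "finite (avoiding_words n)" unfolding avoiding_eq by (rule finite_len)
  show ?thesis using inj F fin by (intro card_inj_on_le) auto
qed

theorem mainTheorem10:
  shows "(\<forall>n. card (P2 n) \<le> card (avoiding_words n)
              \<and> real (card (avoiding_words n)) = fps_nth U (3 * n))
         \<and> (\<lambda>n. real (card (P2 n))) \<in> O(\<lambda>n. 14.864 ^ n)"
proof (intro conjI allI)
  fix n
  show "card (P2 n) \<le> card (avoiding_words n)" by (rule card_P2)
  have "card (avoiding_words n) = cf (3 * n)" unfolding avoiding_eq cf_def NN_def ..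
  then show "real (card (avoiding_words n)) = fps_nth U (3 * n)" by (simp add: U_eq_cf)
next
  show "(\<lambda>n. real (card (P2 n))) \<in> O(\<lambda>n. 14.864 ^ n)"
  proof (rule bigoI)
    show "\<forall>\<^sub>F n in at_top. norm (real (card (P2 n))) \<le> (Phi 0 / 1773194586) * norm ((14.864::real) ^ n)"
    proof (rule always_eventually, rule allI)
      fix n
      have "real (card (P2 n)) \<le> real (cf (3 * n))"
        using card_P2[of n] unfolding avoiding_eq cf_def NN_def by simp
      also have "\<dots> \<le> (Phi 0 / 1773194586) * 14.864 ^ n" by (rule cf_bound)
      finally show "norm (real (card (P2 n))) \<le> (Phi 0 / 1773194586) * norm ((14.864::real) ^ n)"
        by simp
    qed
  qed
qed

end
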